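(* For every integer $n\ge2$, $$\int_0^{1-\frac{\log n}{n}}F_n(w)\,dw\le(2+\sqrt2)\,n.$$
   Context: For $w>0$ and integer $n\ge1$ let $a_n(w)=\sum_{j=0}^n w^j$, $b_n(w)=\sum_{j=1}^n jw^j$, $c_n(w)=\sum_{j=0}^n j^2w^j$, and $$F_n(w)=\frac{1}{2\sqrt{w}}\sqrt{\frac{c_n(w)}{a_n(w)}}\sqrt{\frac{a_n(w)c_n(w)-b_n(w)^2}{w\,a_n(w)^2}}.$$ $\log$ is the natural logarithm. *)

theory Defs
  imports "HOL-Analysis.Analysis"
begin

definition a_n :: "nat \<Rightarrow> real \<Rightarrow> real" where
  "a_n n w = (\<Sum>j=0..n. w ^ j)"

definition b_n :: "nat \<Rightarrow> real \<Rightarrow> real" where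
  "b_n n w = (\<Sum>j=1..n. real j * w ^ j)"

definition c_n :: "nat \<Rightarrow> real \<Rightarrow> real" where
  "c_n n w = (\<Sum>j=0..n. (real j)^2 * w ^ j)"

definition F_n :: "nat \<Rightarrow> real \<Rightarrow> real" where
  "F_n n w = 1 / (2 * sqrt w) * sqrt (c_n n w / a_n n w)
     * sqrt ((a_n n w * c_n n w - (b_n n w)^2) / (w * (a_n n w)^2))"

end

theory Submission imports Defs begin

lemma c_ident: "(1-w)^3 * c_n n w = w + w^2 - w^(n+1) * ((real n+1)^2 - (2*real n^2+2*real n-1)*w + real n^2*w^2)"
proof (induction n)
  case 0 then show ?case by (simp add: c_n_def algebra_simps power2_eq_square power3_eq_cube)
next
  case (Suc n)
  define p where "p = w^(n+1)"
  have e1: "w^(Suc n + 1) = p * w" "w^(Suc n) = p" by (simp_all add: p_def)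
  have "c_n (Suc n) w = c_n n w + (real n + 1)^2 * w^(Suc n)" by (simp add: c_n_def)
  then show ?case using Suc unfolding e1 p_def[symmetric]
    by (simp add: algebra_simps power2_eq_square power3_eq_cube)
qed

lemma a_ident: "a_n n w * (1-w) = 1 - w^(n+1)"
proof (induction n)
  case 0 then show ?case by (simp add: a_n_def)
next
  case (Suc n)
  have "a_n (Suc n) w = a_n n w + w^(n+1)" by (simp add: a_n_def)
  then have "a_n (Suc n) w * (1-w) = a_n n w * (1-w) + w^(n+1)*(1-w)" by (simp add: algebra_simps)
  also have "\<dots> = 1 - w^(n+1) + w^(n+1)*(1-w)" using Suc by simp
  also have "\<dots> = 1 - w^(Suc n+1)" by (simp add: algebra_simps)
  finally show ?case .
qed

lemma b_alt: "b_n n w = (\<Sum>j=0..n. real j * w^j)"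
  by (induction n) (auto simp: b_n_def)

lemma a_ge1: "w \<ge> 0 \<Longrightarrow> a_n n w \<ge> 1"
  by (induction n) (auto simp: a_n_def add_increasing2)

lemma c_nonneg: "w \<ge> 0 \<Longrightarrow> c_n n w \<ge> 0"
  unfolding c_n_def by (intro sum_nonneg) auto

lemma cs: assumes "w \<ge> 0" shows "(b_n n w)^2 \<le> a_n n w * c_n n w"
proof -
  have t: "real j * w^j = sqrt (w^j) * (real j * sqrt (w^j))" for j
  proof -
    have "sqrt (w^j) * (real j * sqrt (w^j)) = real j * (sqrt (w^j) * sqrt (w^j))" by simp
    also have "\<dots> = real j * w^j" using assms by (simp add: abs_of_nonneg)
    finally show ?thesis by (rule sym)
  qed
  have "(b_n n w)^2 = (\<Sum>j=0..n. sqrt (w^j) * (real j * sqrt (w^j)))^2"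
    unfolding b_alt t ..
  also have "\<dots> \<le> (\<Sum>j=0..n. (sqrt (w^j))^2) * (\<Sum>j=0..n. (real j * sqrt (w^j))^2)"
    by (rule Cauchy_Schwarz_ineq_sum)
  also have "\<dots> = a_n n w * c_n n w" using assms
    by (simp add: a_n_def c_n_def power_mult_distrib)
  finally show ?thesis .
qed


lemma c_bound: assumes "0 \<le> w" "w < 1" shows "(1-w)^3 * c_n n w \<le> 2*w"
proof -
  have q: "(real n+1)^2 - (2*real n^2+2*real n-1)*w + real n^2*w^2 = (real n*w - real n - 1)^2 + w"
    by (simp add: algebra_simps power2_eq_square)
  have "0 \<le> w^(n+1) * ((real n+1)^2 - (2*real n^2+2*real n-1)*w + real n^2*w^2)"
    unfolding q using assms by simp
  moreover have "w^2 \<le> w" using assms by (simp add: power2_eq_square mult_right_le_one_le)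
  ultimately show ?thesis unfolding c_ident by linarith
qed

lemma F_bound:
  assumes w0: "0 < w" and w1: "w < 1" and a2: "a_n n w * (1-w) \<ge> 1/2"
  shows "0 \<le> F_n n w \<and> F_n n w \<le> 2 / (1-w)^2"
proof -
  define A where "A = a_n n w"
  define B where "B = b_n n w"
  define C where "C = c_n n w"
  have A1: "A \<ge> 1" unfolding A_def using a_ge1 w0 by simp
  have C0: "C \<ge> 0" unfolding C_def using c_nonneg w0 by simp
  have D0: "A*C - B^2 \<ge> 0" unfolding A_def B_def C_def using cs[of w n] w0 by simp
  have F: "F_n n w = 1 / (2 * sqrt w) * sqrt (C / A) * sqrt ((A*C - B^2) / (w * A^2))"
    by (simp add: F_n_def A_def B_def C_def)
  have sw: "sqrt w > 0" using w0 by simp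
  have nn: "0 \<le> F_n n w" unfolding F using A1 C0 D0 w0 by simp
  have "sqrt ((A*C - B^2) / (w * A^2)) \<le> sqrt (A*C / (w*A^2))"
    using A1 w0 by (intro real_sqrt_le_mono divide_right_mono) auto
  also have "A*C / (w*A^2) = C / (w * A)" using A1 by (simp add: power2_eq_square)
  finally have s1: "sqrt ((A*C - B^2) / (w * A^2)) \<le> sqrt (C / (w*A))" .
  have "F_n n w \<le> 1 / (2 * sqrt w) * sqrt (C / A) * sqrt (C / (w*A))"
    unfolding F using s1 sw A1 C0 by (intro mult_left_mono) auto
  moreover have "1 / (2 * sqrt w) * sqrt (C / A) * sqrt (C / (w*A)) = C / (2*w*A)"
  proof -
    have m1: "sqrt (C / A) * sqrt (C / (w*A)) = sqrt ((C/A)^2 / w)"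
      by (simp add: real_sqrt_mult[symmetric] power2_eq_square)
    have m2: "sqrt ((C/A)^2 / w) = (C/A) / sqrt w" using A1 C0 by (simp add: real_sqrt_divide)
    have "1 / (2 * sqrt w) * sqrt (C / A) * sqrt (C / (w*A)) = 1 / (2 * sqrt w) * ((C/A) / sqrt w)"
      by (simp only: mult.assoc m1 m2)
    also have "\<dots> = C / (2*w*A)" using w0 by (simp add: field_simps)
    finally show ?thesis .
  qed
  ultimately have f1: "F_n n w \<le> C / (2*w*A)" by linarith
  have cb: "(1-w)^3 * C \<le> 2*w" unfolding C_def using c_bound w0 w1 by simp
  have ab: "A * (1-w) \<ge> 1/2" using a2 A_def by simp
  have h1: "4*w*(1/2) \<le> 4*w*(A*(1-w))" using ab w0 by (intro mult_left_mono) auto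
  have h2: "(1-w)^3*C = (C*(1-w)^2)*(1-w)" by (simp add: power3_eq_cube power2_eq_square)
  have h3: "4*w*(A*(1-w)) = (4*w*A)*(1-w)" by simp
  have "(C*(1-w)^2)*(1-w) \<le> (4*w*A)*(1-w)" using cb h1 h2 h3 by linarith
  hence h4: "C * (1-w)^2 \<le> 4*w*A" using w1 by (simp add: mult_le_cancel_right)
  have p1: "2*w*A > 0" using w0 A1 by simp
  have p2: "(1-w)^2 > 0" using w1 by simp
  have h5: "C \<le> 4*w*A / (1-w)^2" using h4 p2 by (simp add: le_divide_eq)
  have "C / (2*w*A) \<le> (4*w*A / (1-w)^2) / (2*w*A)"
    using h5 p1 by (intro divide_right_mono) auto
  also have "\<dots> = 2 / (1-w)^2" using p1 p2 w0 A1 by (simp add: field_simps)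
  finally have "C / (2*w*A) \<le> 2 / (1-w)^2" .
  with f1 nn show ?thesis by linarith
qed


lemma deriv_G: "x < (1::real) \<Longrightarrow> ((\<lambda>w::real. 2 / (1-w)) has_real_derivative 2 / (1-x)^2) (at x within S)"
  by (rule derivative_eq_intros refl | simp add: power2_eq_square)+

lemma ln2_e1: "exp (-0.2::real) \<ge> 0.8" using exp_ge_add_one_self[of "-0.2::real"] by simp
lemma ln2_e2: "exp (0.2::real) \<le> 1.25"
proof -
  have "exp (0.2::real) = inverse (exp (-0.2))" by (simp add: exp_minus)
  also have "\<dots> \<le> inverse 0.8" using ln2_e1 by (intro le_imp_inverse_le) auto
  finally show ?thesis by simp
qed
lemma ln2_e3: "exp (0.6::real) = exp (0.2) ^ 3"
proof -
  have "exp (of_nat 3 * (0.2::real)) = exp (0.2) ^ 3" by (rule exp_of_nat_mult)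
  moreover have "of_nat 3 * (0.2::real) = 0.6" by simp
  ultimately show ?thesis by simp
qed
lemma ln2_e4: "(1.25::real) ^ 3 \<le> 2" by (simp add: power3_eq_cube)
lemma ln2_e5: "1.4 \<le> sqrt (2::real)" by (rule real_le_rsqrt) (simp add: power2_eq_square)

lemma ln2_bound: "ln (2::real) \<ge> 2 - sqrt 2"
proof -
  have "exp (0.2::real) ^ 3 \<le> 1.25 ^ 3" by (rule power_mono[OF ln2_e2]) simp
  hence "exp (0.6::real) \<le> 2" using ln2_e3 ln2_e4 by linarith
  moreover have "0.6 \<le> ln (2::real) \<longleftrightarrow> exp 0.6 \<le> (2::real)" by (rule ln_ge_iff) simp
  ultimately have l: "0.6 \<le> ln (2::real)" by blast
  with ln2_e5 show ?thesis by linarith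
qed

theorem lemma3p6:
  fixes n :: nat
  assumes "n \<ge> 2"
  shows "F_n n integrable_on {0..1 - ln (real n) / real n} \<and>
         integral {0..1 - ln (real n) / real n} (F_n n) \<le> (2 + sqrt 2) * real n"
proof -
  define L where "L = ln (real n)"
  define T where "T = 1 - L / real n"
  have n2: "real n \<ge> 2" using assms by simp
  have L2: "L \<ge> ln 2" unfolding L_def using n2 by simp
  have Lpos: "L > 0" using L2 ln_gt_zero[of "2::real"] by linarith
  have Ln: "L < real n" unfolding L_def using n2 ln_less_self by simp
  have T0: "0 < T" "T < 1" unfolding T_def using Lpos Ln n2 by (auto simp: field_simps)
  have Texp: "T \<le> exp (- L / real n)" unfolding T_def using exp_ge_add_one_self[of "- L / real n"] by simp
  have half: "a_n n w * (1-w) \<ge> 1/2" if w: "0 < w" "w \<le> T" for w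
  proof -
    have "w^n \<le> exp (- L / real n) ^ n" using w Texp by (intro power_mono) auto
    also have "\<dots> = exp (real n * (- L / real n))" by (rule exp_of_nat_mult[symmetric])
    also have "\<dots> = 1 / real n" using n2 by (simp add: L_def exp_minus exp_ln inverse_eq_divide)
    finally have "w^n \<le> 1 / real n" .
    moreover have "w^(n+1) \<le> w^n" using w T0 by (simp add: mult_left_le_one_le)
    moreover have "1 / real n \<le> 1/2" using n2 by simp
    ultimately show ?thesis unfolding a_ident by linarith
  qed
  define g where "g = (\<lambda>w::real. 2 / (1-w)^2)"
  define G where "G = (\<lambda>w::real. 2 / (1-w))"
  have gint: "(g has_integral (G T - G 0)) {0..T}"
  proof (rule fundamental_theorem_of_calculus)
    show "0 \<le> T" using T0 by simp
    fix x assume x: "x \<in> {0..T}"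
    hence "x < 1" using T0 by simp
    hence "(G has_real_derivative g x) (at x within {0..T})"
      unfolding G_def g_def by (rule deriv_G)
    thus "(G has_vector_derivative g x) (at x within {0..T})"
      by (simp add: has_real_derivative_iff_has_vector_derivative)
  qed
  have neg: "negligible ({0..T} - {0<..T} \<union> ({0<..T} - {0..T}))"
    by (rule negligible_subset[of "{0}"]) auto
  have spike: "(f has_integral y) {0..T} \<longleftrightarrow> (f has_integral y) {0<..T}" for f :: "real \<Rightarrow> real" and y
    by (rule has_integral_spike_set_eq; rule negligible_subset[of "{0}"]) auto
  have gint2: "(g has_integral (G T - G 0)) {0<..T}" using gint spike by blast
  have bnd: "0 \<le> F_n n w \<and> F_n n w \<le> g w" if "w \<in> {0<..T}" for w
    using F_bound[of w n] half[of w] that T0 unfolding g_def by auto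
  have ca: "continuous_on S (a_n n)" for S unfolding a_n_def by (intro continuous_intros)
  have cb: "continuous_on S (b_n n)" for S unfolding b_n_def by (intro continuous_intros)
  have cc: "continuous_on S (c_n n)" for S unfolding c_n_def by (intro continuous_intros)
  have apos: "a_n n w \<noteq> 0" if "w \<in> {0<..T}" for w using a_ge1[of w n] that by auto
  have cont: "continuous_on {0<..T} (F_n n)"
  proof -
    have "continuous_on {0<..T} (\<lambda>w. 1 / (2 * sqrt w) * sqrt (c_n n w / a_n n w)
     * sqrt ((a_n n w * c_n n w - (b_n n w)^2) / (w * (a_n n w)^2)))"
      using apos by (intro continuous_intros ca cb cc) auto
    thus ?thesis unfolding F_n_def[abs_def] .
  qed
  have meas: "F_n n \<in> borel_measurable (lebesgue_on {0<..T})"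
    by (rule continuous_imp_measurable_on_sets_lebesgue[OF cont]) auto
  have Fint: "F_n n integrable_on {0<..T}"
    by (rule measurable_bounded_by_integrable_imp_integrable[OF meas, of g])
       (use gint2 bnd in auto)
  have Fle: "integral {0<..T} (F_n n) \<le> G T - G 0"
    using integral_le[OF Fint, of g] gint2 bnd by (auto simp: integral_unique)
  have Fint2: "F_n n integrable_on {0..T}"
    using Fint integrable_spike_set_eq[OF neg] by blast
  have Feq: "integral {0..T} (F_n n) = integral {0<..T} (F_n n)"
    using integrable_integral[OF Fint] spike by (blast intro: integral_unique)
  have GT: "G T - G 0 = 2 * real n / L - 2" unfolding G_def T_def using Lpos n2 by (simp add: field_simps)
  have s2: "(2 + sqrt 2) * L \<ge> 2"
  proof -
    have "(2 + sqrt 2) * L \<ge> (2 + sqrt 2) * (2 - sqrt 2)"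
      using L2 ln2_bound by (intro mult_left_mono) auto
    also have "(2 + sqrt 2) * (2 - sqrt 2) = 2" by (simp add: algebra_simps)
    finally show ?thesis .
  qed
  have "2 * real n \<le> ((2 + sqrt 2) * L) * real n" using s2 n2 by (intro mult_right_mono) auto
  hence "2 * real n / L \<le> (2 + sqrt 2) * real n"
    using Lpos by (simp add: pos_divide_le_eq mult.commute mult.left_commute)
  hence final: "integral {0..T} (F_n n) \<le> (2 + sqrt 2) * real n" using Feq Fle GT by linarith
  show ?thesis using Fint2 final unfolding T_def L_def by simp
qed

end
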